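(* Let $\theta\in(0,1)$ and let $P_\theta=\{p_\theta(i)\}_{i\ge 0}$ be the geometric distribution $p_\theta(i)=(1-\theta)\theta^i$ on the nonnegative integers. Let $a\in\mathbb{R}_+$. If there is an integer $k\ge 1$ with $$\theta^k+\theta^{k+1}\le \frac{1}{a} < \theta^{k-1}+\theta^k,$$ then the Golomb code $\mathrm{G}k$ is an optimal code for $P_\theta$ with respect to the penalty $L_a$. If no such $k$ exists, the unary code $\mathrm{G}1$ is optimal.
   Context: A binary prefix code for the nonnegative integers assigns to each $i\ge 0$ a codeword $c(i)\in\{0,1\}^*$ such that no codeword is a prefix of another; $n(i)$ is the length of $c(i)$ and $N=\{n(i)\}$. For $a>0$, $a\ne 1$, the penalty is $L_a(P,N)=\log_a\sum_{i\ge 0}p(i)a^{n(i)}$; for $a=1$ it is the expected length $\sum_i p(i)n(i)$. A code is optimal if its lengths minimize $L_a(P,N)$ over all binary prefix codes. For an integer $k\ge 1$, let $b(x,k)$ for $0\le x<k$ denote the $(x+1)$th codeword of the complete alphabetic binary code on $k$ items, in which the first $2^{\lceil\log_2 k\rceil}-k$ items have length $\lfloor\log_2 k\rfloor$ and the remaining $2k-2^{\lceil \log_2 k\rceil}$ items have length $\lceil\log_2 k\rceil$ (for $k=1$, $b$ is the empty string). The Golomb code $\mathrm{G}k$ assigns to $j\ge 0$ the codeword $1^{\lfloor j/k\rfloor}\,0\,b(j \bmod k,k)$; $\mathrm{G}1$ is the unary code $\{1^j0\}$. *)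

theory Defs
  imports Complex_Main "HOL-Library.Sublist" "HOL-Library.Extended_Nonnegative_Real"
begin

definition prefix_code :: "(nat \<Rightarrow> bool list) \<Rightarrow> bool" where
  "prefix_code c \<longleftrightarrow> (\<forall>i j. i \<noteq> j \<longrightarrow> \<not> prefix (c i) (c j))"

text \<open>Penalty L_a(P,N), valued in the extended reals (the defining series may diverge).
  For a \<noteq> 1: log_a of sum p(i) a^n(i) (log_a of infinity is infinity, which only
  happens for a > 1); for a = 1: the expected length.\<close>
definition penalty :: "real \<Rightarrow> (nat \<Rightarrow> real) \<Rightarrow> (nat \<Rightarrow> nat) \<Rightarrow> ereal" where
  "penalty a p n =
     (if a = 1 then enn2ereal (\<Sum>i. ennreal (p i * real (n i)))
      else (let S = (\<Sum>i. ennreal (p i * a ^ n i))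
            in if S = \<infinity> then \<infinity> else ereal (log a (enn2real S))))"

definition optimal_code :: "real \<Rightarrow> (nat \<Rightarrow> real) \<Rightarrow> (nat \<Rightarrow> bool list) \<Rightarrow> bool" where
  "optimal_code a p c \<longleftrightarrow> prefix_code c \<and>
     (\<forall>c'. prefix_code c' \<longrightarrow>
        penalty a p (\<lambda>i. length (c i)) \<le> penalty a p (\<lambda>i. length (c' i)))"

definition bin :: "nat \<Rightarrow> nat \<Rightarrow> bool list" where
  "bin w v = map (\<lambda>j. odd (v div 2 ^ (w - 1 - j))) [0..<w]"

text \<open>(x+1)-th codeword of the complete alphabetic binary code on k items:
  the first 2^ceil(log2 k) - k items get floor(log2 k) bits, the rest ceil(log2 k) bits,
  codewords in lexicographic (canonical) order.\<close>
definition balph :: "nat \<Rightarrow> nat \<Rightarrow> bool list" where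
  "balph x k =
     (let m = nat \<lceil>log 2 (real k)\<rceil>; s = 2 ^ m - k
      in if x < s then bin (nat \<lfloor>log 2 (real k)\<rfloor>) x else bin m (x + s))"

definition golomb :: "nat \<Rightarrow> nat \<Rightarrow> bool list" where
  "golomb k j = replicate (j div k) True @ [False] @ balph (j mod k) k"

end

theory Submission
  imports Defs
begin

lemma length_bin[simp]: "length (bin w v) = w"
  by (simp add: bin_def)

lemma nth_bin: "i < w \<Longrightarrow> bin w v ! i = odd (v div 2 ^ (w - 1 - i))"
  by (simp add: bin_def)

lemma take_bin: "j \<le> w \<Longrightarrow> take j (bin w v) = bin j (v div 2 ^ (w - j))"
proof (rule nth_equalityI)
  assume "j \<le> w"
  show "length (take j (bin w v)) = length (bin j (v div 2 ^ (w - j)))" using \<open>j \<le> w\<close> by simp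
  fix i assume "i < length (take j (bin w v))"
  hence i: "i < j" using \<open>j \<le> w\<close> by simp
  have "v div 2 ^ (w - j) div 2 ^ (j - 1 - i) = v div 2 ^ (w - 1 - i)"
  proof -
    have "w - 1 - i = (w - j) + (j - 1 - i)" using i \<open>j \<le> w\<close> by simp
    then show ?thesis by (simp add: power_add div_mult2_eq)
  qed
  then show "take j (bin w v) ! i = bin j (v div 2 ^ (w - j)) ! i"
    using i \<open>j \<le> w\<close> by (simp add: nth_bin)
qed

lemma bin_Suc: "bin (Suc w) v = bin w (v div 2) @ [odd v]"
proof -
  have "bin (Suc w) v = take w (bin (Suc w) v) @ [bin (Suc w) v ! w]"
    by (metis length_bin lessI take_Suc_conv_app_nth take_all order_refl)
  also have "take w (bin (Suc w) v) = bin w (v div 2)" by (simp add: take_bin)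
  also have "bin (Suc w) v ! w = odd v" by (simp add: nth_bin)
  finally show ?thesis .
qed

lemma bin_inj: "v < 2 ^ w \<Longrightarrow> v' < 2 ^ w \<Longrightarrow> bin w v = bin w v' \<Longrightarrow> v = v'"
proof (induction w arbitrary: v v')
  case 0
  then show ?case by simp
next
  case (Suc w)
  from Suc.prems(3) have e: "v div 2 = v' div 2" "odd v = odd v'"
    using Suc.IH[of "v div 2" "v' div 2"] Suc.prems(1,2) by (auto simp: bin_Suc)
  then show ?case by (metis div_mult_mod_eq odd_iff_mod_2_eq_one parity_cases)
qed

definition mk :: "nat \<Rightarrow> nat" where "mk k = nat \<lceil>log 2 (real k)\<rceil>"

lemma mk_real: "1 \<le> k \<Longrightarrow> real (mk k) = of_int \<lceil>log 2 (real k)\<rceil>"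
proof -
  assume "1 \<le> k"
  then have "0 \<le> log 2 (real k)" by simp
  then have "0 \<le> \<lceil>log 2 (real k)\<rceil>" by linarith
  then show ?thesis unfolding mk_def by simp
qed

lemma mk_ge: "1 \<le> k \<Longrightarrow> k \<le> 2 ^ mk k"
proof -
  assume k: "1 \<le> k"
  have "real k = 2 powr (log 2 (real k))" using k by simp
  also have "\<dots> \<le> 2 powr (real (mk k))" using mk_real[OF k]
    by (intro powr_mono) (linarith, simp)
  also have "\<dots> = 2 ^ mk k" by (simp add: powr_realpow)
  finally have "real k \<le> 2 ^ mk k" .
  then show ?thesis by (metis of_nat_le_iff of_nat_numeral of_nat_power)
qed

lemma mk_lt: "2 \<le> k \<Longrightarrow> 2 ^ (mk k - 1) < k \<and> 1 \<le> mk k"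
proof -
  assume k: "2 \<le> k"
  have l1: "1 \<le> log 2 (real k)" using k by simp
  have m1: "1 \<le> mk k" using mk_real[of k] k l1
    by linarith
  have "real (mk k - 1) = real (mk k) - 1" using m1 by simp
  also have "\<dots> < log 2 (real k)" using mk_real[of k] k by linarith
  finally have lt: "real (mk k - 1) < log 2 (real k)" .
  have "2 ^ (mk k - 1) = 2 powr (real (mk k - 1))" by (simp add: powr_realpow)
  also have "\<dots> < 2 powr (log 2 (real k))" using lt by (intro powr_less_mono) auto
  also have "\<dots> = real k" using k by simp
  finally have "(2::real) ^ (mk k - 1) < real k" .
  then have "2 ^ (mk k - 1) < k" by (metis of_nat_less_iff of_nat_numeral of_nat_power)
  then show ?thesis using m1 by simp
qed

lemma mk_floor: "1 \<le> k \<Longrightarrow> k < 2 ^ mk k \<Longrightarrow> nat \<lfloor>log 2 (real k)\<rfloor> = mk k - 1"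
proof -
  assume k: "1 \<le> k" "k < 2 ^ mk k"
  have "real k < 2 ^ mk k" using k(2) by (metis of_nat_less_iff of_nat_numeral of_nat_power)
  then have "log 2 (real k) < log 2 (2 ^ mk k)" using k(1) by (subst log_less_cancel_iff) auto
  also have "log 2 (2 ^ mk k) = real (mk k)" by (simp add: log_nat_power)
  finally have lt: "log 2 (real k) < real (mk k)" .
  have ge: "real (mk k) - 1 < log 2 (real k)" using mk_real[OF k(1)] by linarith
  have "\<lfloor>log 2 (real k)\<rfloor> = int (mk k) - 1"
    using lt ge by (subst floor_eq_iff) auto
  then show ?thesis by simp
qed

lemma mk_one[simp]: "mk (Suc 0) = 0" by (simp add: mk_def)

lemma s_small: "1 \<le> k \<Longrightarrow> 0 < 2 ^ mk k - k \<Longrightarrow> 2 ^ mk k - k < 2 ^ (mk k - 1) \<and> 2 \<le> k"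
proof -
  assume k: "1 \<le> k" "0 < 2 ^ mk k - k"
  have k2: "2 \<le> k" proof (rule ccontr)
    assume "\<not> 2 \<le> k" then have k1: "k = 1" using k by linarith
    have "mk k = 0" unfolding mk_def k1 by simp
    then have "2 ^ mk k - k = 0" using k1 by simp
    then show False using k by linarith
  qed
  from mk_lt[OF k2] have a: "2 ^ (mk k - 1) < k" "1 \<le> mk k" by auto
  have "mk k = Suc (mk k - 1)" using a(2) by simp
  then have b: "(2::nat) ^ mk k = 2 * 2 ^ (mk k - 1)" by (metis power_Suc)
  define P :: nat where "P = 2 ^ (mk k - 1)"
  have P0: "0 < P" unfolding P_def by simp
  have "2 * P - k < P" using a(1) P0 unfolding P_def[symmetric] by linarith
  then have "2 ^ mk k - k < P" using b unfolding P_def[symmetric] by simp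
  then show ?thesis using k2 P_def by blast
qed

lemma balph_len: "1 \<le> k \<Longrightarrow> length (balph x k) = (if x < 2 ^ mk k - k then mk k - 1 else mk k)"
proof -
  assume k: "1 \<le> k"
  show ?thesis
  proof (cases "x < 2 ^ mk k - k")
    case True
    then have "k < 2 ^ mk k" by simp
    then show ?thesis using True mk_floor[OF k] unfolding balph_def Let_def mk_def[symmetric] by simp
  next
    case False
    then show ?thesis unfolding balph_def Let_def mk_def[symmetric] by simp
  qed
qed

lemma prefix_eqlen: "prefix xs ys \<Longrightarrow> length xs = length ys \<Longrightarrow> xs = ys"
  by (auto simp: prefix_def)

lemma prefix_nth: "prefix xs ys \<Longrightarrow> i < length xs \<Longrightarrow> xs ! i = ys ! i"
  by (auto simp: prefix_def nth_append)

lemma balph_prefix: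
  assumes k: "1 \<le> k" and xy: "x < k" "y < k" "x \<noteq> y"
  shows "\<not> prefix (balph x k) (balph y k)"
proof
  assume pf: "prefix (balph x k) (balph y k)"
  define m where "m = mk k"
  define s where "s = 2 ^ m - k"
  have km: "k \<le> 2 ^ m" using mk_ge[OF k] m_def by simp
  have bx: "balph x k = (if x < s then bin (m - 1) x else bin m (x + s))"
    unfolding balph_def Let_def s_def m_def mk_def[symmetric]
    using mk_floor[OF k] by (auto simp: s_def)
  have by': "balph y k = (if y < s then bin (m - 1) y else bin m (y + s))"
    unfolding balph_def Let_def s_def m_def mk_def[symmetric]
    using mk_floor[OF k] by (auto simp: s_def)
  show False
  proof (cases "x < s")
    case xs: True
    then have sp: "0 < s" by simp
    from s_small[OF k] sp have ss: "s < 2 ^ (m - 1)" "2 \<le> k" unfolding s_def m_def by auto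
    have m1: "1 \<le> m" using mk_lt[OF ss(2)] m_def by simp
    have "m = Suc (m - 1)" using m1 by simp
    then have m2: "(2::nat) ^ m = 2 * 2 ^ (m - 1)" by (metis power_Suc)
    show False
    proof (cases "y < s")
      case True
      then have "prefix (bin (m - 1) x) (bin (m - 1) y)" using pf bx by' xs by simp
      then have "bin (m - 1) x = bin (m - 1) y" by (rule prefix_eqlen) simp
      then show False using bin_inj[of x "m-1" y] xs True ss xy by simp
    next
      case False
      then have "prefix (bin (m - 1) x) (bin m (y + s))" using pf bx by' xs by simp
      then have "bin (m - 1) x = take (m - 1) (bin m (y + s))"
        by (metis append_eq_conv_conj length_bin prefix_def)
      also have "\<dots> = bin (m - 1) ((y + s) div 2)" using m1 by (simp add: take_bin)
      finally have e: "bin (m - 1) x = bin (m - 1) ((y + s) div 2)" .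
      have "(y + s) div 2 < 2 ^ (m - 1)" using xy km m2 s_def by simp
      then have "x = (y + s) div 2" using bin_inj[OF _ _ e] xs ss by simp
      moreover have "s \<le> (y + s) div 2" using False by simp
      ultimately show False using xs by simp
    qed
  next
    case xs: False
    show False
    proof (cases "y < s")
      case True
      then have sp: "0 < s" by simp
      from s_small[OF k] sp have "2 \<le> k" unfolding s_def m_def by auto
      have m1: "1 \<le> m" using mk_lt[OF \<open>2 \<le> k\<close>] m_def by simp
      have "length (balph x k) = m" "length (balph y k) = m - 1" using bx by' xs True by auto
      then show False using pf prefix_length_le m1 by fastforce
    next
      case False
      then have "prefix (bin m (x + s)) (bin m (y + s))" using pf bx by' xs by simp
      then have "bin m (x + s) = bin m (y + s)" by (rule prefix_eqlen) simp
      moreover have "x + s < 2 ^ m" "y + s < 2 ^ m" using xy km unfolding s_def by auto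
      ultimately have "x + s = y + s" using bin_inj by blast
      then show False using xy by simp
    qed
  qed
qed

lemma length_golomb: "length (golomb k j) = j div k + 1 + length (balph (j mod k) k)"
  by (simp add: golomb_def)

lemma golomb_prefix_code: "1 \<le> k \<Longrightarrow> prefix_code (golomb k)"
  unfolding prefix_code_def
proof (intro allI impI notI)
  fix i j assume k: "1 \<le> k" and ij: "i \<noteq> j" and pf: "prefix (golomb k i) (golomb k j)"
  show False
  proof (cases "i div k = j div k")
    case True
    then have "i mod k \<noteq> j mod k" using ij by (metis div_mult_mod_eq)
    moreover have "prefix (balph (i mod k) k) (balph (j mod k) k)"
      using pf True by (simp add: golomb_def)
    ultimately show False using balph_prefix[OF k, of "i mod k" "j mod k"] k by simp
  next
    case False
    show False
    proof (cases "i div k < j div k")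
      case True
      have "golomb k i ! (i div k) = golomb k j ! (i div k)"
        by (rule prefix_nth[OF pf]) (simp add: golomb_def)
      then show False using True by (simp add: golomb_def nth_append)
    next
      case F2: False
      then have lt: "j div k < i div k" using False by simp
      have "golomb k i ! (j div k) = golomb k j ! (j div k)"
        by (rule prefix_nth[OF pf]) (use lt in \<open>simp add: golomb_def\<close>)
      then show False using lt by (simp add: golomb_def nth_append)
    qed
  qed
qed

function Uf :: "real \<Rightarrow> real \<Rightarrow> nat \<Rightarrow> nat \<Rightarrow> real" where
  "Uf q a k r = (if r = 0 \<or> k \<le> r then 1 + a * q ^ (2 * r - k) / (1 - a * q ^ k)
     else 1 + a * q ^ (2 * r - min (2 * r) k) * Uf q a k (min (2 * r) k))"
  by auto
termination by (relation "measure (\<lambda>(q, a, k, r). k - r)") auto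

declare Uf.simps[simp del]

lemma chain_down:
  fixes f :: "nat \<Rightarrow> real"
  assumes step: "\<And>t. j \<le> t \<Longrightarrow> t < n \<Longrightarrow> f (Suc t) \<le> q * f t" and q: "0 \<le> q"
  shows "j \<le> t \<Longrightarrow> t \<le> n \<Longrightarrow> f t \<le> q ^ (t - j) * f j"
proof (induction t)
  case 0
  then show ?case by simp
next
  case (Suc t)
  show ?case
  proof (cases "j = Suc t")
    case True
    then show ?thesis by simp
  next
    case False
    then have jt: "j \<le> t" using Suc.prems by simp
    have "f (Suc t) \<le> q * f t" using step[OF jt] Suc.prems by simp
    also have "\<dots> \<le> q * (q ^ (t - j) * f j)"
      using Suc.IH[OF jt] Suc.prems q by (simp add: mult_left_mono)
    also have "\<dots> = q ^ (Suc t - j) * f j" using jt by (simp add: Suc_diff_le)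
    finally show ?thesis .
  qed
qed

lemma chain_up:
  fixes f :: "nat \<Rightarrow> real"
  assumes step: "\<And>t. n \<le> t \<Longrightarrow> q * f t \<le> f (Suc t)" and q: "0 \<le> q"
  shows "n \<le> j \<Longrightarrow> j \<le> t \<Longrightarrow> q ^ (t - j) * f j \<le> f t"
proof (induction t)
  case 0
  then show ?case by simp
next
  case (Suc t)
  show ?case
  proof (cases "j = Suc t")
    case True
    then show ?thesis by simp
  next
    case False
    then have jt: "j \<le> t" using Suc.prems by simp
    have "q ^ (Suc t - j) * f j = q * (q ^ (t - j) * f j)" using jt by (simp add: Suc_diff_le)
    also have "\<dots> \<le> q * f t" using Suc.IH[OF Suc.prems(1) jt] q by (simp add: mult_left_mono)
    also have "\<dots> \<le> f (Suc t)" using step Suc.prems jt by simp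
    finally show ?thesis .
  qed
qed

context
  fixes q a :: real and k :: nat
  assumes q0: "0 < q" and q1: "q < 1" and a0: "0 < a" and k1: "1 \<le> k"
    and low: "a * (q ^ k + q ^ (k + 1)) \<le> 1"
    and up: "k = 1 \<or> 1 \<le> a * (q ^ (k - 1) + q ^ k)"
begin

lemma D_pos: "0 < 1 - a * q ^ k"
proof -
  have "0 < a * q ^ (k + 1)" using a0 q0 by simp
  then show ?thesis using low by (simp add: algebra_simps)
qed

lemma U_ge1: "1 \<le> Uf q a k r"
proof (induction "k - r" arbitrary: r rule: less_induct)
  case less
  show ?case
  proof (cases "r = 0 \<or> k \<le> r")
    case True
    then show ?thesis using D_pos a0 q0 by (simp add: Uf.simps)
  next
    case False
    have "k - min (2 * r) k < k - r" using False by auto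
    then have "1 \<le> Uf q a k (min (2 * r) k)" using less by blast
    then show ?thesis using False a0 q0 by (subst Uf.simps) simp
  qed
qed

lemma U_k: "Uf q a k k = 1 / (1 - a * q ^ k)"
  using D_pos k1 by (subst Uf.simps) (simp add: field_simps mult_2)

lemma U_big: "k \<le> r \<Longrightarrow> Uf q a k r = 1 + a * q ^ (2 * r - k) / (1 - a * q ^ k)"
  by (subst Uf.simps) simp

lemma U_eq: "1 \<le> r \<Longrightarrow> Uf q a k r = 1 + a * q ^ (2 * r - min (2 * r) k) * Uf q a k (min (2 * r) k)"
proof (cases "k \<le> r")
  case True
  then have "min (2 * r) k = k" by simp
  then show ?thesis using True U_big U_k by simp
next
  case False
  assume "1 \<le> r"
  then show ?thesis using False by (subst Uf.simps) simp
qed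

lemma U_up: "k \<le> r \<Longrightarrow> q * Uf q a k r \<le> Uf q a k (Suc r)"
proof -
  assume r: "k \<le> r"
  define D where "D = 1 - a * q ^ k"
  define e where "e = 2 * r - k"
  have D0: "0 < D" using D_pos D_def by simp
  have e1: "2 * Suc r - k = e + 2" using r e_def by simp
  have "q ^ (e + 1) \<le> q ^ (k + 1)" using r e_def q0 q1 by (intro power_decreasing) auto
  then have "a * q ^ (e + 1) \<le> a * q ^ (k + 1)" using a0 by simp
  also have "\<dots> \<le> D" using low D_def by (simp add: algebra_simps)
  finally have key: "a * q ^ (e + 1) \<le> D" .
  have "q * D + a * q * q ^ e \<le> D + a * q ^ 2 * q ^ e"
  proof -
    have "(a * q ^ (e + 1)) * (1 - q) \<le> D * (1 - q)" using key q1 by (simp add: mult_right_mono)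
    then show ?thesis by (simp add: algebra_simps power2_eq_square)
  qed
  then have "(q * D + a * q * q ^ e) / D \<le> (D + a * q ^ 2 * q ^ e) / D"
    using D0 by (simp add: divide_right_mono)
  moreover have "q * (1 + a * q ^ e / D) = (q * D + a * q * q ^ e) / D"
    using D0 by (simp add: field_simps)
  moreover have "1 + a * q ^ (e + 2) / D = (D + a * q ^ 2 * q ^ e) / D"
    using D0 by (simp add: field_simps power_add power2_eq_square)
  ultimately have "q * (1 + a * q ^ e / D) \<le> 1 + a * q ^ (e + 2) / D" by simp
  then show ?thesis using U_big[OF r] U_big[of "Suc r"] r e1 D_def e_def by simp
qed


lemma U_nonneg: "0 \<le> Uf q a k r" using U_ge1[of r] by simp

lemma U_down_aux: "\<forall>r. 1 \<le> r \<longrightarrow> r < k \<longrightarrow> k - r \<le> d \<longrightarrow> Uf q a k (Suc r) \<le> q * Uf q a k r"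
proof (induction d)
  case 0
  then show ?case by auto
next
  case (Suc d)
  show ?case
  proof (intro allI impI)
    fix r assume r1: "1 \<le> r" and rk: "r < k" and rd: "k - r \<le> Suc d"
    have IH: "\<And>t. r < t \<Longrightarrow> t < k \<Longrightarrow> Uf q a k (Suc t) \<le> q * Uf q a k t"
      using Suc.IH r1 rd by auto
    have k2: "2 \<le> k" using r1 rk by simp
    then have upk: "1 \<le> a * (q ^ (k - 1) + q ^ k)" using up by auto
    define D where "D = 1 - a * q ^ k"
    have D0: "0 < D" using D_pos D_def by simp
    have Uk: "Uf q a k k = 1 / D" using U_k D_def by simp
    have qk1: "q ^ (k - 1) \<le> q" using k2 q0 q1 using power_decreasing[of 1 "k-1" q] by simp
    show "Uf q a k (Suc r) \<le> q * Uf q a k r"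
    proof (cases "k \<le> 2 * r")
      case True
      define e where "e = 2 * r - k"
      have Ur: "Uf q a k r = 1 + a * q ^ e * (1 / D)"
        using U_eq[OF r1] True Uk e_def by simp
      have ee: "2 * Suc r - min (2 * Suc r) k = e + 2" using True e_def by simp
      have US: "Uf q a k (Suc r) = 1 + a * q ^ (e + 2) * (1 / D)"
        using U_eq[of "Suc r"] True Uk unfolding ee by simp
      have "q ^ (k - 1) \<le> q ^ (e + 1)" using q0 q1 rk e_def True
        by (intro power_decreasing) auto
      then have "a * q ^ (k - 1) \<le> a * q ^ (e + 1)" using a0 by simp
      then have "D \<le> a * q ^ (e + 1)" using upk D_def by (simp add: algebra_simps)
      then have "1 \<le> a * q ^ (e + 1) / D" using D0 by simp
      then have h: "(1 - q) * 1 \<le> (1 - q) * (a * q ^ (e + 1) / D)" using q1 by (intro mult_left_mono) auto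
      define X where "X = a * q ^ (e + 1) / D"
      have i1: "q * (a * q ^ e * (1 / D)) = X" unfolding X_def using D0 by (simp add: field_simps)
      have i2: "a * q ^ (e + 2) * (1 / D) = q * X" unfolding X_def using D0 by (simp add: field_simps)
      have i3: "(1 - q) * X = X - q * X" by (simp add: algebra_simps)
      have i4: "q * (1 + a * q ^ e * (1 / D)) = q + q * (a * q ^ e * (1 / D))" by (simp add: algebra_simps)
      have h': "(1 - q) * 1 \<le> (1 - q) * X" using h unfolding X_def .
      show ?thesis unfolding Ur US i4 i1 i2 using h' by (simp add: algebra_simps)
    next
      case False
      have Ur: "Uf q a k r = 1 + a * Uf q a k (2 * r)"
        using U_eq[OF r1] False by simp
      have h1: "Uf q a k (Suc (2 * r)) \<le> q * Uf q a k (2 * r)" using IH[of "2 * r"] r1 False by simp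
      have US: "Uf q a k (Suc r) \<le> 1 + a * (q ^ 2 * Uf q a k (2 * r))"
      proof (cases "2 * r + 2 \<le> k")
        case True
        have "Uf q a k (Suc r) = 1 + a * Uf q a k (Suc (Suc (2 * r)))"
          using U_eq[of "Suc r"] True by simp
        also have "Uf q a k (Suc (Suc (2 * r))) \<le> q * Uf q a k (Suc (2 * r))"
          using IH[of "Suc (2 * r)"] True r1 by simp
        also have "\<dots> \<le> q * (q * Uf q a k (2 * r))" using h1 q0 by simp
        finally show ?thesis using a0 by (simp add: power2_eq_square mult_left_mono)
      next
        case F2: False
        then have kk: "k = Suc (2 * r)" using False by simp
        have "Uf q a k (Suc r) = 1 + a * q * Uf q a k (Suc (2 * r))"
          using U_eq[of "Suc r"] kk by simp
        also have "\<dots> \<le> 1 + a * q * (q * Uf q a k (2 * r))" using h1 a0 q0 by simp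
        finally show ?thesis by (simp add: power2_eq_square algebra_simps)
      qed
      have "Uf q a k k \<le> q ^ (k - 2 * r) * Uf q a k (2 * r)"
        by (rule chain_down[of "2 * r" k "Uf q a k" q]) (use IH r1 False q0 in auto)
      also have "\<dots> \<le> Uf q a k (2 * r)"
        using U_nonneg q0 q1 by (intro mult_left_le_one_le power_le_one) auto
      finally have Ubig: "1 / D \<le> Uf q a k (2 * r)" using Uk by simp
      have "a * q ^ (k - 1) \<le> a * q" using qk1 a0 by simp
      moreover have "D \<le> a * q ^ (k - 1)" using upk D_def by (simp add: algebra_simps)
      ultimately have "D \<le> a * q" by linarith
      then have "1 \<le> a * q * (1 / D)" using D0 by simp
      also have "\<dots> \<le> a * q * Uf q a k (2 * r)" using Ubig a0 q0 by (intro mult_left_mono) auto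
      finally have "1 \<le> a * q * Uf q a k (2 * r)" .
      then have "(1 - q) * 1 \<le> (1 - q) * (a * q * Uf q a k (2 * r))" using q1 by (intro mult_left_mono) auto
      then show ?thesis using US Ur by (simp add: algebra_simps power2_eq_square)
    qed
  qed
qed

lemma U_down: "1 \<le> r \<Longrightarrow> r < k \<Longrightarrow> Uf q a k (Suc r) \<le> q * Uf q a k r"
  using U_down_aux[of "k - r"] by simp

lemma U_chain_down: "1 \<le> j \<Longrightarrow> j \<le> t \<Longrightarrow> t \<le> k \<Longrightarrow> Uf q a k t \<le> q ^ (t - j) * Uf q a k j"
  by (rule chain_down[of j k "Uf q a k" q]) (use U_down q0 in auto)

lemma U_chain_up: "k \<le> j \<Longrightarrow> j \<le> t \<Longrightarrow> q ^ (t - j) * Uf q a k j \<le> Uf q a k t"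
  by (rule chain_up[of k q "Uf q a k"]) (use U_up q0 in auto)

lemma bellman:
  assumes r: "1 \<le> r" and r': "1 \<le> r'" and x: "x + r' \<le> 2 * r"
  shows "Uf q a k r \<le> 1 + a * q ^ x * Uf q a k r'"
proof -
  define p where "p = min (2 * r) k"
  have Ur: "Uf q a k r = 1 + a * q ^ (2 * r - p) * Uf q a k p" using U_eq[OF r] p_def by simp
  have p1: "1 \<le> p" "p \<le> k" using r k1 p_def by auto
  have qx: "q ^ (2 * r - r') \<le> q ^ x" using x q0 q1 by (intro power_decreasing) auto
  have "q ^ (2 * r - p) * Uf q a k p \<le> q ^ (2 * r - r') * Uf q a k r'"
  proof (cases "r' \<le> p")
    case True
    have "Uf q a k p \<le> q ^ (p - r') * Uf q a k r'" using U_chain_down[OF r' True p1(2)] .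
    then have "q ^ (2 * r - p) * Uf q a k p \<le> q ^ (2 * r - p) * (q ^ (p - r') * Uf q a k r')"
      using q0 by (simp add: mult_left_mono)
    also have "\<dots> = q ^ (2 * r - r') * Uf q a k r'"
      using True p_def x by (simp add: power_add[symmetric] mult.assoc[symmetric])
    finally show ?thesis .
  next
    case False
    then have pk: "p = k" using p_def x by auto
    have "q ^ (r' - k) * Uf q a k k \<le> Uf q a k r'" using U_chain_up[of k r'] False pk by simp
    then have "q ^ (2 * r - r') * (q ^ (r' - k) * Uf q a k k) \<le> q ^ (2 * r - r') * Uf q a k r'"
      using q0 by (simp add: mult_left_mono)
    moreover have "q ^ (2 * r - r') * (q ^ (r' - k) * Uf q a k k) = q ^ (2 * r - p) * Uf q a k p"
      using False pk x by (simp add: power_add[symmetric] mult.assoc[symmetric])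
    ultimately show ?thesis by simp
  qed
  also have "\<dots> \<le> q ^ x * Uf q a k r'" using qx U_nonneg by (simp add: mult_right_mono)
  finally have "a * (q ^ (2 * r - p) * Uf q a k p) \<le> a * (q ^ x * Uf q a k r')" using a0 by simp
  then show ?thesis using Ur by (simp add: mult.assoc)
qed

lemma U_bound: "1 \<le> r \<Longrightarrow> Uf q a k r \<le> 1 + a * Uf q a k 1"
proof -
  assume r: "1 \<le> r"
  define p where "p = min (2 * r) k"
  have Ur: "Uf q a k r = 1 + a * q ^ (2 * r - p) * Uf q a k p" using U_eq[OF r] p_def by simp
  have p1: "1 \<le> p" "p \<le> k" using r k1 p_def by auto
  have "Uf q a k p \<le> q ^ (p - 1) * Uf q a k 1" using U_chain_down[of 1 p] p1 by simp
  also have "\<dots> \<le> Uf q a k 1" using U_nonneg q0 q1 by (intro mult_left_le_one_le power_le_one) auto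
  finally have "q ^ (2 * r - p) * Uf q a k p \<le> Uf q a k 1"
    using U_nonneg q0 q1 by (meson dual_order.trans mult_left_le_one_le power_le_one less_imp_le zero_le_power)
  then show ?thesis using Ur a0 by (simp add: mult.assoc)
qed
end

definition lev :: "(nat \<Rightarrow> bool list) \<Rightarrow> nat \<Rightarrow> nat set" where
  "lev c L = {i. length (c i) \<le> L}"

definition intn :: "(nat \<Rightarrow> bool list) \<Rightarrow> nat \<Rightarrow> bool list set" where
  "intn c L = {w. length w = L \<and> (\<exists>i. strict_prefix w (c i))}"

lemma finite_len_le: "finite {w :: bool list. length w \<le> L}"
  using finite_lists_length_le[of "UNIV :: bool set" L] by simp

context
  fixes c :: "nat \<Rightarrow> bool list"
  assumes pc: "prefix_code c"
begin

lemma pc_inj: "inj c"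
proof (rule injI)
  fix x y assume e: "c x = c y"
  show "x = y"
  proof (rule ccontr)
    assume "x \<noteq> y"
    then have "\<not> prefix (c x) (c y)" using pc unfolding prefix_code_def by blast
    then show False using e by simp
  qed
qed

lemma tl_split: "length w = Suc L \<Longrightarrow> w = take L w @ [last w]"
proof -
  assume lw: "length w = Suc L"
  then have "w \<noteq> []" by auto
  then have "w = butlast w @ [last w]" by simp
  moreover have "butlast w = take L w" using lw by (simp add: butlast_conv_take)
  ultimately show ?thesis by simp
qed

lemma fin_lev: "finite (lev c L)"
proof -
  have "c ` lev c L \<subseteq> {w. length w \<le> L}" unfolding lev_def by auto
  then have "finite (c ` lev c L)" using finite_len_le finite_subset by blast
  then show ?thesis using pc_inj finite_imageD inj_on_subset by blast
qed

lemma fin_intn: "finite (intn c L)"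
proof -
  have "intn c L \<subseteq> {w. length w \<le> L}" unfolding intn_def by auto
  then show ?thesis using finite_len_le finite_subset by blast
qed

lemma exists_long: "\<exists>i. L < length (c i)"
proof (rule ccontr)
  assume "\<not> (\<exists>i. L < length (c i))"
  then have "lev c L = UNIV" unfolding lev_def by (auto simp: not_less)
  then show False using fin_lev[of L] by simp
qed

lemma intn_ne: "1 \<le> card (intn c L)"
proof -
  obtain i where i: "L < length (c i)" using exists_long by blast
  have "take L (c i) \<in> intn c L" unfolding intn_def
    using i by (auto intro!: exI[of _ i] simp: strict_prefix_def take_is_prefix)
  then have "intn c L \<noteq> {}" by blast
  then show ?thesis using fin_intn[of L] by (simp add: Suc_le_eq card_gt_0_iff)
qed

lemma intn0: "card (intn c 0) = 1"
proof -
  have "intn c 0 \<subseteq> {[]}" unfolding intn_def by auto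
  then have "card (intn c 0) \<le> card {[] :: bool list}" by (intro card_mono) auto
  then have "card (intn c 0) \<le> 1" by simp
  then show ?thesis using intn_ne[of 0] by simp
qed

lemma lev0: "lev c 0 = {}"
proof -
  have "length (c i) \<noteq> 0" for i
  proof
    assume "length (c i) = 0"
    then have "c i = []" by simp
    then have "prefix (c i) (c (Suc i))" by simp
    then show False using pc unfolding prefix_code_def by auto
  qed
  then show ?thesis unfolding lev_def by auto
qed

lemma lev_step: "card (lev c (Suc L)) - card (lev c L) + card (intn c (Suc L)) \<le> 2 * card (intn c L)"
  and lev_mono_step: "card (lev c L) \<le> card (lev c (Suc L))"
proof -
  define E where "E = {i. length (c i) = Suc L}"
  have split: "lev c (Suc L) = lev c L \<union> E" unfolding lev_def E_def by auto
  have disj: "lev c L \<inter> E = {}" unfolding lev_def E_def by auto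
  have finE: "finite E" using fin_lev[of "Suc L"] split by auto
  have cs: "card (lev c (Suc L)) = card (lev c L) + card E"
    using split disj fin_lev finE by (simp add: card_Un_disjoint)
  then show "card (lev c L) \<le> card (lev c (Suc L))" by simp
  define W where "W = c ` E \<union> intn c (Suc L)"
  have disj2: "c ` E \<inter> intn c (Suc L) = {}"
  proof (rule ccontr)
    assume "c ` E \<inter> intn c (Suc L) \<noteq> {}"
    then obtain i j where "strict_prefix (c i) (c j)" unfolding intn_def by auto
    then have "i \<noteq> j" "prefix (c i) (c j)" by (auto simp: strict_prefix_def)
    then show False using pc unfolding prefix_code_def by blast
  qed
  have cW: "card W = card E + card (intn c (Suc L))"
    unfolding W_def using disj2 finE fin_intn pc_inj
    by (simp add: card_Un_disjoint card_image inj_on_subset)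
  have lenW: "\<And>w. w \<in> W \<Longrightarrow> length w = Suc L" unfolding W_def E_def intn_def by auto
  define f where "f w = (take L w, last w)" for w :: "bool list"
  have inj: "inj_on f W"
  proof (rule inj_onI)
    fix v w assume v: "v \<in> W" and w: "w \<in> W" and e: "f v = f w"
    have "v = take L v @ [last v]" using lenW[OF v] by (rule tl_split)
    also have "\<dots> = take L w @ [last w]" using e unfolding f_def by simp
    also have "\<dots> = w" using tl_split[OF lenW[OF w]] by simp
    finally show "v = w" .
  qed
  have img: "f ` W \<subseteq> intn c L \<times> UNIV"
  proof
    fix y assume "y \<in> f ` W"
    then obtain w where w: "w \<in> W" and y: "y = f w" by auto
    have lw: "length w = Suc L" using lenW[OF w] .
    have "\<exists>j. prefix w (c j) \<and> (w = c j \<or> strict_prefix w (c j))"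
      using w unfolding W_def E_def intn_def by (auto simp: strict_prefix_def)
    then obtain j where pj: "prefix w (c j)" by blast
    have sp: "strict_prefix (take L w) w" using lw
      by (simp add: strict_prefix_def take_is_prefix)
    have "strict_prefix (take L w) (c j)" using sp pj by (rule prefix_order.less_le_trans)
    then have "take L w \<in> intn c L" unfolding intn_def using lw by auto
    then show "y \<in> intn c L \<times> UNIV" using y f_def by simp
  qed
  have "card W = card (f ` W)" using inj by (simp add: card_image)
  also have "\<dots> \<le> card (intn c L \<times> (UNIV :: bool set))"
    using img fin_intn by (intro card_mono) auto
  also have "\<dots> = 2 * card (intn c L)" by (simp add: card_cartesian_product)
  finally have "card W \<le> 2 * card (intn c L)" .
  then show "card (lev c (Suc L)) - card (lev c L) + card (intn c (Suc L)) \<le> 2 * card (intn c L)"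
    using cs cW by simp
qed

end

definition gsum :: "real \<Rightarrow> nat \<Rightarrow> real" where "gsum a n = (\<Sum>L<n. a ^ L)"

lemma gsum_Suc: "gsum a (Suc n) = 1 + a * gsum a n"
  unfolding gsum_def sum.lessThan_Suc_shift by (simp add: sum_distrib_left)

lemma gsum_0[simp]: "gsum a 0 = 0" by (simp add: gsum_def)

lemma gsum_nonneg: "0 < a \<Longrightarrow> 0 \<le> gsum a n"
  unfolding gsum_def by (intro sum_nonneg) auto

lemma gsum_mono: "0 < a \<Longrightarrow> m \<le> n \<Longrightarrow> gsum a m \<le> gsum a n"
  unfolding gsum_def by (intro sum_mono2) auto

lemma gsum_pow: "a ^ n = 1 + (a - 1) * gsum a n"
proof (induction n)
  case 0
  then show ?case by simp
next
  case (Suc n)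
  have "a ^ Suc n = a * (1 + (a - 1) * gsum a n)" using Suc by simp
  also have "\<dots> = 1 + (a - 1) * gsum a (Suc n)" by (simp add: gsum_Suc algebra_simps)
  finally show ?case .
qed

lemma geo_part: "(\<Sum>i<n. (1 - q) * q ^ i) = 1 - (q::real) ^ n"
  by (induction n) (auto simp: algebra_simps)

lemma sum_decr_le:
  fixes f :: "nat \<Rightarrow> real"
  assumes dec: "\<And>i j. i \<le> j \<Longrightarrow> f j \<le> f i"
  shows "finite A \<Longrightarrow> card A = n \<Longrightarrow> (\<Sum>i\<in>A. f i) \<le> (\<Sum>i<n. f i)"
proof (induction n arbitrary: A)
  case 0
  then show ?case by simp
next
  case (Suc n)
  have fA: "finite A" and cA: "card A = Suc n" using Suc.prems by auto
  have ne: "A \<noteq> {}" using cA by auto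
  define M where "M = Max A"
  have MA: "M \<in> A" unfolding M_def using fA ne by (rule Max_in)
  have sub: "A \<subseteq> {..M}" using fA M_def by auto
  have "card A \<le> card {..M}" using sub by (intro card_mono) auto
  then have nM: "n \<le> M" using cA by simp
  have c': "card (A - {M}) = n" using cA MA fA by (simp add: card_Diff_singleton)
  have f': "finite (A - {M})" using fA by simp
  have "(\<Sum>i\<in>A. f i) = f M + (\<Sum>i\<in>A - {M}. f i)" using fA MA by (rule sum.remove)
  also have "(\<Sum>i\<in>A - {M}. f i) \<le> (\<Sum>i<n. f i)" using Suc.IH[OF f' c'] .
  also have "f M \<le> f n" using dec[OF nM] .
  finally show ?case by simp
qed

lemma trunc_sum: "(\<Sum>L<M. a ^ L * (if L < n then p else 0)) = p * gsum a (min M n)"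
proof (induction M)
  case 0
  then show ?case by (simp add: gsum_def)
next
  case (Suc M)
  show ?case
  proof (cases "M < n")
    case True
    then have "min (Suc M) n = Suc (min M n)" "min M n = M" by auto
    then show ?thesis using Suc True by (simp add: gsum_def algebra_simps)
  next
    case False
    then have "min (Suc M) n = min M n" by auto
    then show ?thesis using Suc False by simp
  qed
qed

context
  fixes q a :: real and k :: nat and c :: "nat \<Rightarrow> bool list"
  assumes q0: "0 < q" and q1: "q < 1" and a0: "0 < a" and k1: "1 \<le> k"
    and low: "a * (q ^ k + q ^ (k + 1)) \<le> 1"
    and up: "k = 1 \<or> 1 \<le> a * (q ^ (k - 1) + q ^ k)"
    and pc: "prefix_code c"
begin

lemma p_sums: "(\<lambda>i. (1 - q) * q ^ i) sums 1"
proof -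
  have "(\<lambda>i. q ^ i) sums (1 / (1 - q))" using q0 q1 by (intro geometric_sums) simp
  then have "(\<lambda>i. (1 - q) * q ^ i) sums ((1 - q) * (1 / (1 - q)))" by (rule sums_mult)
  then show ?thesis using q1 by simp
qed

lemma tail_sums: "(\<lambda>i. if L < length (c i) then (1 - q) * q ^ i else 0) sums (1 - (\<Sum>i\<in>lev c L. (1 - q) * q ^ i))"
proof -
  have "(\<lambda>i. (1 - q) * q ^ i - (if i \<in> lev c L then (1 - q) * q ^ i else 0)) sums (1 - (\<Sum>i\<in>lev c L. (1 - q) * q ^ i))"
    by (intro sums_diff p_sums sums_If_finite_set fin_lev[OF pc])
  moreover have "(\<lambda>i. (1 - q) * q ^ i - (if i \<in> lev c L then (1 - q) * q ^ i else 0)) = (\<lambda>i. if L < length (c i) then (1 - q) * q ^ i else 0)"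
    by (auto simp: lev_def)
  ultimately show ?thesis by simp
qed

lemma tail_ge: "q ^ card (lev c L) \<le> (\<Sum>i. if L < length (c i) then (1 - q) * q ^ i else 0)"
proof -
  have dec: "(1 - q) * q ^ j \<le> (1 - q) * q ^ i" if "i \<le> j" for i j
  proof -
    have "q ^ j \<le> q ^ i" using that q0 q1 by (intro power_decreasing) auto
    then show ?thesis using q1 by (intro mult_left_mono) auto
  qed
  have "(\<Sum>i\<in>lev c L. (1 - q) * q ^ i) \<le> (\<Sum>i<card (lev c L). (1 - q) * q ^ i)"
    by (rule sum_decr_le[OF dec fin_lev[OF pc] refl])
  then show ?thesis using tail_sums[THEN sums_unique, symmetric] geo_part[of q] by simp
qed

lemma lower_bound:
  assumes sm: "summable (\<lambda>i. (1 - q) * q ^ i * gsum a (length (c i)))"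
  shows "Uf q a k 1 \<le> (\<Sum>i. (1 - q) * q ^ i * gsum a (length (c i)))"
proof -
  define C where "C = (\<Sum>i. (1 - q) * q ^ i * gsum a (length (c i)))"
  define s where "s L = card (lev c L)" for L
  define r where "r L = card (intn c L)" for L
  define t where "t L = a ^ L * q ^ s L" for L
  define U where "U = Uf q a k"
  note bell = bellman[OF q0 q1 a0 k1 low up]
  have tele: "U 1 \<le> (\<Sum>L<M. t L) + a ^ M * q ^ s M * U (r M)" for M
  proof (induction M)
    case 0
    then show ?case using intn0[OF pc] lev0[OF pc] by (simp add: r_def s_def)
  next
    case (Suc M)
    have st: "s (Suc M) - s M + r (Suc M) \<le> 2 * r M" using lev_step[OF pc] s_def r_def by simp
    have sm': "s M \<le> s (Suc M)" using lev_mono_step[OF pc] s_def by simp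
    have "U (r M) \<le> 1 + a * q ^ (s (Suc M) - s M) * U (r (Suc M))"
      unfolding U_def by (rule bell) (use intn_ne[OF pc] r_def st in auto)
    then have "a ^ M * q ^ s M * U (r M) \<le> a ^ M * q ^ s M * (1 + a * q ^ (s (Suc M) - s M) * U (r (Suc M)))"
      using a0 q0 by (intro mult_left_mono) auto
    also have "\<dots> = t M + a ^ Suc M * q ^ s (Suc M) * U (r (Suc M))"
      unfolding t_def using sm' by (simp add: algebra_simps power_add[symmetric])
    finally show ?case using Suc by simp
  qed
  have inner_sm: "summable (\<lambda>i. if L < length (c i) then (1 - q) * q ^ i else 0)" for L
    using tail_sums by (rule sums_summable)
  have partial: "(\<Sum>L<M. t L) \<le> C" for M
  proof -
    have "(\<Sum>L<M. t L) \<le> (\<Sum>L<M. a ^ L * (\<Sum>i. if L < length (c i) then (1 - q) * q ^ i else 0))"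
      unfolding t_def s_def using tail_ge a0 by (intro sum_mono mult_left_mono) auto
    also have "\<dots> = (\<Sum>L<M. (\<Sum>i. a ^ L * (if L < length (c i) then (1 - q) * q ^ i else 0)))"
      using inner_sm by (simp add: suminf_mult)
    also have "\<dots> = (\<Sum>i. \<Sum>L<M. a ^ L * (if L < length (c i) then (1 - q) * q ^ i else 0))"
      using inner_sm by (subst suminf_sum) (auto intro: summable_mult)
    also have "\<dots> \<le> C" unfolding C_def
    proof (rule suminf_le)
      fix i
      have "(\<Sum>L<M. a ^ L * (if L < length (c i) then (1 - q) * q ^ i else 0)) = (1 - q) * q ^ i * gsum a (min M (length (c i)))"
        by (rule trunc_sum)
      also have "\<dots> \<le> (1 - q) * q ^ i * gsum a (length (c i))"
        using q0 q1 a0 by (intro mult_left_mono gsum_mono) auto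
      finally show "(\<Sum>L<M. a ^ L * (if L < length (c i) then (1 - q) * q ^ i else 0)) \<le> (1 - q) * q ^ i * gsum a (length (c i))" .
    next
      show "summable (\<lambda>i. \<Sum>L<M. a ^ L * (if L < length (c i) then (1 - q) * q ^ i else 0))"
        using inner_sm by (intro summable_sum) (auto intro: summable_mult)
    next
      show "summable (\<lambda>i. (1 - q) * q ^ i * gsum a (length (c i)))" by (rule sm)
    qed
    finally show ?thesis .
  qed
  have tsum: "summable t"
    by (rule summableI_nonneg_bounded[of t C]) (use partial a0 q0 t_def in auto)
  then have t0: "t \<longlonglongrightarrow> 0" by (rule summable_LIMSEQ_zero)
  define B where "B = 1 + a * U 1"
  have Ub: "U (r M) \<le> B" for M
    unfolding U_def B_def using U_bound[OF q0 q1 a0 k1 low up] intn_ne[OF pc] r_def by simp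
  have "U 1 - C \<le> B * t M" for M
  proof -
    have "U 1 \<le> (\<Sum>L<M. t L) + t M * U (r M)" using tele[of M] t_def by simp
    also have "t M * U (r M) \<le> t M * B" using Ub a0 q0 t_def by (intro mult_left_mono) auto
    finally show ?thesis using partial[of M] by (simp add: algebra_simps)
  qed
  moreover have "(\<lambda>M. B * t M) \<longlonglongrightarrow> 0" using tendsto_mult_right_zero[OF t0] by simp
  ultimately have "U 1 - C \<le> 0" by (intro LIMSEQ_le_const[of "\<lambda>M. B * t M"]) auto
  then show ?thesis unfolding C_def U_def by simp
qed

end

lemma sum_split_add: "(\<Sum>j<m + n. f j) = (\<Sum>j<m. f j) + (\<Sum>j<n. f (j + m))"
  for f :: "nat \<Rightarrow> real"
  by (induction n) (auto simp: algebra_simps)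

lemma sum_if_split: "s \<le> k \<Longrightarrow> (\<Sum>j<k. if j < s then X j else Y j) = (\<Sum>j<s. X j) + ((\<Sum>j<k. Y j) - (\<Sum>j<s. Y j))"
  for X Y :: "nat \<Rightarrow> real"
proof (induction k)
  case 0
  then show ?case by simp
next
  case (Suc k)
  show ?case
  proof (cases "s \<le> k")
    case True
    then show ?thesis using Suc by simp
  next
    case False
    then have sk: "s = Suc k" using Suc.prems by simp
    have "(\<Sum>j<Suc k. if j < s then X j else Y j) = (\<Sum>j<Suc k. X j)"
      using sk by (intro sum.cong) auto
    then show ?thesis using sk by simp
  qed
qed

lemma length_golomb_shift: "1 \<le> k \<Longrightarrow> length (golomb k (j + k)) = Suc (length (golomb k j))"
  by (simp add: length_golomb)

lemma length_golomb_small: "1 \<le> k \<Longrightarrow> j < k \<Longrightarrow>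
  length (golomb k j) = Suc (if j < 2 ^ mk k - k then mk k - 1 else mk k)"
  by (simp add: length_golomb balph_len)

context
  fixes q a :: real and k :: nat
  assumes q0: "0 < q" and q1: "q < 1" and a0: "0 < a" and k1: "1 \<le> k"
    and low: "a * (q ^ k + q ^ (k + 1)) \<le> 1"
    and up: "k = 1 \<or> 1 \<le> a * (q ^ (k - 1) + q ^ k)"
begin

lemma U_dbl: "2 ^ j < k \<Longrightarrow> Uf q a k 1 = gsum a j + a ^ j * Uf q a k (2 ^ j)"
proof (induction j)
  case 0
  then show ?case by simp
next
  case (Suc j)
  have lt: "2 ^ j < k" "2 * 2 ^ j < k" using Suc.prems by auto
  have "Uf q a k (2 ^ j) = 1 + a * q ^ (2 * 2 ^ j - min (2 * 2 ^ j) k) * Uf q a k (min (2 * 2 ^ j) k)"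
    by (rule U_eq[OF q0 q1 a0 k1 low up]) simp
  also have "\<dots> = 1 + a * Uf q a k (2 ^ Suc j)" using lt(2) by simp
  finally have e: "Uf q a k (2 ^ j) = 1 + a * Uf q a k (2 ^ Suc j)" .
  have "Uf q a k 1 = gsum a j + a ^ j * (1 + a * Uf q a k (2 ^ Suc j))" using Suc.IH[OF lt(1)] e by simp
  also have "\<dots> = gsum a (Suc j) + a ^ Suc j * Uf q a k (2 ^ Suc j)"
    by (simp add: gsum_def algebra_simps)
  finally show ?case .
qed

lemma U1_formula: "Uf q a k 1 = gsum a (mk k) + a ^ mk k * q ^ (2 ^ mk k - k) / (1 - a * q ^ k)"
proof (cases "k = 1")
  case True
  have D: "1 - a * q \<noteq> 0" using D_pos[OF q0 q1 a0 k1 low up] True by simp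
  have "Uf q a k 1 = 1 + a * q / (1 - a * q)" using U_big[OF q0 q1 a0 k1 low up, of 1] True by simp
  also have "\<dots> = 1 / (1 - a * q)" using D by (simp add: field_simps)
  finally show ?thesis using True by simp
next
  case False
  then have k2: "2 \<le> k" using k1 by simp
  define m where "m = mk k"
  have m: "2 ^ (m - 1) < k" "1 \<le> m" using mk_lt[OF k2] m_def by auto
  have km: "k \<le> 2 ^ m" using mk_ge[OF k1] m_def by simp
  have mm: "m = Suc (m - 1)" using m by simp
  have two: "2 * 2 ^ (m - 1) = (2::nat) ^ m" using mm by (metis power_Suc)
  have "Uf q a k (2 ^ (m - 1)) = 1 + a * q ^ (2 * 2 ^ (m - 1) - min (2 * 2 ^ (m - 1)) k) * Uf q a k (min (2 * 2 ^ (m - 1)) k)"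
    by (rule U_eq[OF q0 q1 a0 k1 low up]) simp
  also have "\<dots> = 1 + a * q ^ (2 ^ m - k) * (1 / (1 - a * q ^ k))"
    unfolding two using km U_k[OF q0 q1 a0 k1 low up] by simp
  finally have e: "Uf q a k (2 ^ (m - 1)) = 1 + a * q ^ (2 ^ m - k) * (1 / (1 - a * q ^ k))" .
  have "Uf q a k 1 = gsum a (m - 1) + a ^ (m - 1) * Uf q a k (2 ^ (m - 1))" using U_dbl m(1) by blast
  also have "\<dots> = gsum a (Suc (m - 1)) + a ^ Suc (m - 1) * q ^ (2 ^ m - k) / (1 - a * q ^ k)"
    unfolding e by (simp add: gsum_def algebra_simps)
  finally show ?thesis using mm m_def by simp
qed

abbreviation "pg j \<equiv> (1 - q) * q ^ j * gsum a (length (golomb k j))"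

lemma C_formula: "(\<Sum>j<k. pg j) + q ^ k = (1 - a * q ^ k) * Uf q a k 1"
proof -
  define m where "m = mk k"
  define s where "s = 2 ^ m - k"
  define g where "g = gsum a m"
  have sk: "s \<le> k"
  proof (cases "s = 0")
    case False
    then have "s < 2 ^ (mk k - 1)" "2 \<le> k" using s_small[OF k1] s_def m_def by auto
    then show ?thesis using mk_lt[of k] by simp
  qed simp
  have D: "1 - a * q ^ k \<noteq> 0" using D_pos[OF q0 q1 a0 k1 low up] by simp
  have geoX: "(\<Sum>j<n. (1 - q) * q ^ j * X) = (1 - q ^ n) * X" for n X
  proof -
    have "(\<Sum>j<n. (1 - q) * q ^ j * X) = (\<Sum>j<n. (1 - q) * q ^ j) * X" by (rule sum_distrib_right[symmetric])
    then show ?thesis by (simp add: geo_part)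
  qed
  have "pg j = (if j < s then (1 - q) * q ^ j * g else (1 - q) * q ^ j * gsum a (Suc m))" if j: "j < k" for j
  proof (cases "j < s")
    case True
    then have "0 < 2 ^ mk k - k" using s_def m_def by simp
    then have "2 \<le> k" using s_small[OF k1] by blast
    then have "1 \<le> m" using mk_lt m_def by blast
    then show ?thesis using True length_golomb_small[OF k1 j] s_def m_def g_def by simp
  next
    case False
    then show ?thesis using length_golomb_small[OF k1 j] s_def m_def by simp
  qed
  then have "(\<Sum>j<k. pg j) = (\<Sum>j<k. if j < s then (1 - q) * q ^ j * g else (1 - q) * q ^ j * gsum a (Suc m))"
    by (intro sum.cong) auto
  also have "\<dots> = (\<Sum>j<s. (1 - q) * q ^ j * g) + ((\<Sum>j<k. (1 - q) * q ^ j * gsum a (Suc m)) - (\<Sum>j<s. (1 - q) * q ^ j * gsum a (Suc m)))"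
    by (rule sum_if_split[OF sk])
  also have "\<dots> = (1 - q ^ s) * g + ((1 - q ^ k) - (1 - q ^ s)) * gsum a (Suc m)"
    unfolding geoX by (simp add: algebra_simps)
  finally have C: "(\<Sum>j<k. pg j) = (1 - q ^ s) * g + ((1 - q ^ k) - (1 - q ^ s)) * (1 + a * g)"
    by (simp add: gsum_Suc g_def)
  have am: "a ^ m = 1 + (a - 1) * g" using gsum_pow g_def by simp
  have U1: "(1 - a * q ^ k) * Uf q a k 1 = (1 - a * q ^ k) * g + a ^ m * q ^ s"
    using U1_formula D unfolding m_def[symmetric] s_def[symmetric] g_def[symmetric] by (simp add: field_simps)
  show ?thesis unfolding C U1 am by (simp add: algebra_simps)
qed

lemma golomb_partial: "(\<Sum>j<N * k. pg j) \<le> Uf q a k 1"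
proof (induction N)
  case 0
  then show ?case using U_ge1[OF q0 q1 a0 k1 low up, of 1] by simp
next
  case (Suc N)
  have shift: "pg (j + k) = q ^ k * ((1 - q) * q ^ j) + a * q ^ k * pg j" for j
    using length_golomb_shift[OF k1, of j] by (simp add: gsum_Suc power_add algebra_simps)
  have "(\<Sum>j<Suc N * k. pg j) = (\<Sum>j<k. pg j) + (\<Sum>j<N * k. pg (j + k))"
    using sum_split_add[of "\<lambda>j. pg j" k "N * k"] by (simp add: add.commute)
  also have "(\<Sum>j<N * k. pg (j + k)) = q ^ k * (\<Sum>j<N * k. (1 - q) * q ^ j) + a * q ^ k * (\<Sum>j<N * k. pg j)"
    unfolding shift by (simp add: sum.distrib sum_distrib_left)
  also have "\<dots> = q ^ k * (1 - q ^ (N * k)) + a * q ^ k * (\<Sum>j<N * k. pg j)"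
    by (simp add: geo_part)
  also have "\<dots> \<le> q ^ k + a * q ^ k * Uf q a k 1"
  proof -
    have "q ^ k * (1 - q ^ (N * k)) \<le> q ^ k" using q0 by simp
    moreover have "a * q ^ k * (\<Sum>j<N * k. pg j) \<le> a * q ^ k * Uf q a k 1"
      using Suc.IH a0 q0 by (intro mult_left_mono) auto
    ultimately show ?thesis by linarith
  qed
  finally have "(\<Sum>j<Suc N * k. pg j) \<le> (\<Sum>j<k. pg j) + q ^ k + a * q ^ k * Uf q a k 1" by simp
  also have "\<dots> = Uf q a k 1" using C_formula by (simp add: algebra_simps)
  finally show ?case .
qed

lemma pg_nonneg: "0 \<le> pg j"
  using q0 q1 a0 gsum_nonneg by simp

lemma golomb_bound: "summable (\<lambda>j. pg j) \<and> (\<Sum>j. pg j) \<le> Uf q a k 1"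
proof -
  have b: "(\<Sum>j<n. pg j) \<le> Uf q a k 1" for n
  proof -
    have "(\<Sum>j<n. pg j) \<le> (\<Sum>j<n * k. pg j)"
      using k1 pg_nonneg by (intro sum_mono2) auto
    also have "\<dots> \<le> Uf q a k 1" by (rule golomb_partial)
    finally show ?thesis .
  qed
  have sm: "summable (\<lambda>j. pg j)" by (rule summableI_nonneg_bounded[OF pg_nonneg b])
  moreover have "(\<Sum>j. pg j) \<le> Uf q a k 1" by (rule suminf_le_const[OF sm b])
  ultimately show ?thesis by simp
qed

end

lemma gsum_one: "gsum 1 m = real m"
  by (simp add: gsum_def)

lemma gsum_small: "0 < a \<Longrightarrow> a < 1 \<Longrightarrow> gsum a m \<le> 1 / (1 - a)"
proof -
  assume a: "0 < a" "a < 1"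
  have "a ^ m = 1 + (a - 1) * gsum a m" by (rule gsum_pow)
  then have "(1 - a) * gsum a m = 1 - a ^ m" by (simp add: algebra_simps)
  also have "\<dots> \<le> 1" using a by simp
  finally have "(1 - a) * gsum a m \<le> 1" .
  then show ?thesis using a by (simp add: field_simps)
qed

lemma pen_compare:
  fixes q a :: real and nG n :: "nat \<Rightarrow> nat"
  assumes q0: "0 < q" and q1: "q < 1" and a0: "0 < a"
    and smG: "summable (\<lambda>i. (1 - q) * q ^ i * gsum a (nG i))"
    and le: "summable (\<lambda>i. (1 - q) * q ^ i * gsum a (n i)) \<Longrightarrow>
             (\<Sum>i. (1 - q) * q ^ i * gsum a (nG i)) \<le> (\<Sum>i. (1 - q) * q ^ i * gsum a (n i))"
  shows "penalty a (\<lambda>i. (1 - q) * q ^ i) nG \<le> penalty a (\<lambda>i. (1 - q) * q ^ i) n"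
proof -
  define p where "p i = (1 - q) * q ^ i" for i
  have p0: "0 < p i" for i using q0 q1 p_def by simp
  have psums: "p sums 1"
  proof -
    have "(\<lambda>i. q ^ i) sums (1 / (1 - q))" using q0 q1 by (intro geometric_sums) simp
    then have "(\<lambda>i. (1 - q) * q ^ i) sums ((1 - q) * (1 / (1 - q)))" by (rule sums_mult)
    moreover have "p = (\<lambda>i. (1 - q) * q ^ i)" using p_def by (simp add: fun_eq_iff)
    ultimately show ?thesis using q1 by simp
  qed
  define f where "f m i = p i * gsum a (m i)" for m :: "nat \<Rightarrow> nat" and i
  have f0: "0 \<le> f m i" for m i using p0 gsum_nonneg[OF a0] f_def by (simp add: less_imp_le)
  have smG': "summable (f nG)" using smG unfolding f_def p_def .
  have le': "summable (f n) \<Longrightarrow> suminf (f nG) \<le> suminf (f n)" using le unfolding f_def p_def .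
  show ?thesis
  proof (cases "a = 1")
    case True
    have fe: "(\<lambda>i. p i * real (m i)) = f m" for m unfolding f_def True gsum_one by simp
    have fe': "p i * real (m i) = f m i" for m i using fe[of m] by metis
    have eG: "(\<Sum>i. ennreal (p i * real (nG i))) = ennreal (suminf (f nG))"
      unfolding fe' by (rule suminf_ennreal2[OF f0 smG'])
    show ?thesis
    proof (cases "summable (f n)")
      case True
      have "(\<Sum>i. ennreal (p i * real (n i))) = ennreal (suminf (f n))"
        unfolding fe' by (rule suminf_ennreal2[OF f0 True])
      moreover have "0 \<le> suminf (f nG)" "0 \<le> suminf (f n)"
        using suminf_nonneg[OF smG' f0] suminf_nonneg[OF True f0] by auto
      ultimately show ?thesis unfolding penalty_def p_def[symmetric] using \<open>a = 1\<close> eG le'[OF True]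
        by simp
    next
      case False
      then have "(\<Sum>i. ennreal (f n i)) = top" using summable_suminf_not_top[of "f n", OF f0] by blast
      then have "(\<Sum>i. ennreal (p i * real (n i))) = top" unfolding fe' .
      then show ?thesis unfolding penalty_def p_def[symmetric] using \<open>a = 1\<close> by simp
    qed
  next
    case an1: False
    define h where "h m i = p i * a ^ (m i)" for m :: "nat \<Rightarrow> nat" and i
    have h0: "0 < h m i" for m i unfolding h_def using p0 a0 by simp
    have hf: "h m i = p i + (a - 1) * f m i" for m i
      unfolding h_def f_def gsum_pow[of a "m i"] by (simp add: algebra_simps)
    have hsums: "summable (f m) \<Longrightarrow> h m sums (1 + (a - 1) * suminf (f m))" for m
    proof -
      assume "summable (f m)"
      then have "(\<lambda>i. (a - 1) * f m i) sums ((a - 1) * suminf (f m))"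
        by (intro sums_mult summable_sums)
      then have "(\<lambda>i. p i + (a - 1) * f m i) sums (1 + (a - 1) * suminf (f m))"
        by (intro sums_add psums)
      then show ?thesis unfolding hf[abs_def] by simp
    qed
    have pen_fin: "summable (f m) \<Longrightarrow> penalty a p m = ereal (log a (1 + (a - 1) * suminf (f m)))" for m
    proof -
      assume sm: "summable (f m)"
      have hs: "h m sums (1 + (a - 1) * suminf (f m))" by (rule hsums[OF sm])
      have pos: "0 < 1 + (a - 1) * suminf (f m)"
        using suminf_pos[OF sums_summable[OF hs] h0] sums_unique[OF hs] by simp
      have "(\<Sum>i. ennreal (h m i)) = ennreal (1 + (a - 1) * suminf (f m))"
        using suminf_ennreal2[of "h m", OF less_imp_le[OF h0] sums_summable[OF hs]] sums_unique[OF hs] by simp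
      then have "(\<Sum>i. ennreal (p i * a ^ m i)) = ennreal (1 + (a - 1) * suminf (f m))"
        unfolding h_def .
      then show ?thesis unfolding penalty_def using an1 pos by simp
    qed
    have posG: "0 < 1 + (a - 1) * suminf (f nG)"
      using suminf_pos[OF sums_summable[OF hsums[OF smG']] h0] sums_unique[OF hsums[OF smG']] by simp
    show ?thesis
    proof (cases "summable (f n)")
      case True
      have posn: "0 < 1 + (a - 1) * suminf (f n)"
        using suminf_pos[OF sums_summable[OF hsums[OF True]] h0] sums_unique[OF hsums[OF True]] by simp
      have "log a (1 + (a - 1) * suminf (f nG)) \<le> log a (1 + (a - 1) * suminf (f n))"
      proof (cases "1 < a")
        case True
        have "(a - 1) * suminf (f nG) \<le> (a - 1) * suminf (f n)"
          using le'[OF \<open>summable (f n)\<close>] True by (intro mult_left_mono) auto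
        then show ?thesis using True posG posn by simp
      next
        case False
        then have a1: "a < 1" using an1 by simp
        have "(1 - a) * suminf (f nG) \<le> (1 - a) * suminf (f n)"
          using le'[OF \<open>summable (f n)\<close>] a1 by (intro mult_left_mono) auto
        then have xy: "1 + (a - 1) * suminf (f n) \<le> 1 + (a - 1) * suminf (f nG)" by (simp add: algebra_simps)
        have lna: "ln a < 0" using a0 a1 by simp
        have "ln (1 + (a - 1) * suminf (f n)) \<le> ln (1 + (a - 1) * suminf (f nG))"
          using xy posn by simp
        then have "ln (1 + (a - 1) * suminf (f nG)) / ln a \<le> ln (1 + (a - 1) * suminf (f n)) / ln a"
          using lna by (intro divide_right_mono_neg) auto
        then show ?thesis by (simp add: log_def)
      qed
      then show ?thesis using pen_fin[OF smG'] pen_fin[OF True] unfolding p_def by simp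
    next
      case False
      have a1: "1 < a"
      proof (rule ccontr)
        assume "\<not> 1 < a"
        then have a1: "a < 1" using an1 by simp
        have "summable (\<lambda>i. p i * (1 / (1 - a)))" using psums by (intro summable_mult2 sums_summable)
        then have "summable (f n)"
        proof (rule summable_comparison_test')
          fix i :: nat
          have "p i * gsum a (n i) \<le> p i * (1 / (1 - a))"
            using gsum_small[OF a0 a1, of "n i"] p0[of i] by (intro mult_left_mono) auto
          then show "norm (f n i) \<le> p i * (1 / (1 - a))"
            using f0[of n i] unfolding f_def by simp
        qed
        then show False using False by simp
      qed
      have "\<not> summable (h n)"
      proof
        assume "summable (h n)"
        then have "summable (\<lambda>i. (h n i - p i) / (a - 1))"
          using psums by (intro summable_divide summable_diff sums_summable) auto
        moreover have "(\<lambda>i. (h n i - p i) / (a - 1)) = f n" using hf a1 by (auto simp: field_simps)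
        ultimately show False using False by simp
      qed
      then have "(\<Sum>i. ennreal (h n i)) = top" using summable_suminf_not_top[of "h n"] h0 less_imp_le by blast
      then have "penalty a p n = \<infinity>" unfolding penalty_def h_def using an1 by simp
      then show ?thesis unfolding p_def by simp
    qed
  qed
qed

lemma golomb_optimal:
  fixes q a :: real and k :: nat
  assumes q0: "0 < q" and q1: "q < 1" and a0: "0 < a" and k1: "1 \<le> k"
    and low: "a * (q ^ k + q ^ (k + 1)) \<le> 1"
    and up: "k = 1 \<or> 1 \<le> a * (q ^ (k - 1) + q ^ k)"
  shows "optimal_code a (\<lambda>i. (1 - q) * q ^ i) (golomb k)"
  unfolding optimal_code_def
proof (intro conjI allI impI)
  show "prefix_code (golomb k)" by (rule golomb_prefix_code[OF k1])
  fix c assume pc: "prefix_code c"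
  note gb = golomb_bound[OF q0 q1 a0 k1 low up]
  show "penalty a (\<lambda>i. (1 - q) * q ^ i) (\<lambda>i. length (golomb k i)) \<le> penalty a (\<lambda>i. (1 - q) * q ^ i) (\<lambda>i. length (c i))"
  proof (rule pen_compare[OF q0 q1 a0])
    show "summable (\<lambda>i. (1 - q) * q ^ i * gsum a (length (golomb k i)))" using gb by simp
    assume sm: "summable (\<lambda>i. (1 - q) * q ^ i * gsum a (length (c i)))"
    have "(\<Sum>i. (1 - q) * q ^ i * gsum a (length (golomb k i))) \<le> Uf q a k 1" using gb by simp
    also have "\<dots> \<le> (\<Sum>i. (1 - q) * q ^ i * gsum a (length (c i)))"
      by (rule lower_bound[OF q0 q1 a0 k1 low up pc sm])
    finally show "(\<Sum>i. (1 - q) * q ^ i * gsum a (length (golomb k i))) \<le> (\<Sum>i. (1 - q) * q ^ i * gsum a (length (c i)))" .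
  qed
qed

theorem theorem1:
  fixes \<theta> a :: real
  assumes "0 < \<theta>" and "\<theta> < 1" and "0 < a"
  defines "p \<equiv> (\<lambda>i::nat. (1 - \<theta>) * \<theta> ^ i)"
  shows "(\<forall>k::nat. k \<ge> 1 \<and> \<theta> ^ k + \<theta> ^ (k + 1) \<le> 1 / a \<and> 1 / a < \<theta> ^ (k - 1) + \<theta> ^ k
            \<longrightarrow> optimal_code a p (golomb k))
       \<and> ((\<nexists>k::nat. k \<ge> 1 \<and> \<theta> ^ k + \<theta> ^ (k + 1) \<le> 1 / a \<and> 1 / a < \<theta> ^ (k - 1) + \<theta> ^ k)
            \<longrightarrow> optimal_code a p (golomb 1))"
proof (intro conjI allI impI)
  fix k :: nat
  assume h: "k \<ge> 1 \<and> \<theta> ^ k + \<theta> ^ (k + 1) \<le> 1 / a \<and> 1 / a < \<theta> ^ (k - 1) + \<theta> ^ k"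
  have low: "a * (\<theta> ^ k + \<theta> ^ (k + 1)) \<le> 1" using h assms(3) by (simp add: field_simps)
  have up: "1 \<le> a * (\<theta> ^ (k - 1) + \<theta> ^ k)" using h assms(3) by (simp add: field_simps)
  show "optimal_code a p (golomb k)" unfolding p_def
    using golomb_optimal[OF assms(1,2,3) _ low] h up by blast
next
  assume nex: "\<nexists>k::nat. k \<ge> 1 \<and> \<theta> ^ k + \<theta> ^ (k + 1) \<le> 1 / a \<and> 1 / a < \<theta> ^ (k - 1) + \<theta> ^ k"
  have low1: "\<theta> ^ 1 + \<theta> ^ (1 + 1) \<le> 1 / a"
  proof (rule ccontr)
    assume nl: "\<not> ?thesis"
    obtain n where n: "\<theta> ^ n < 1 / (2 * a)" using real_arch_pow_inv[of "1 / (2 * a)" \<theta>] assms by auto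
    have "\<theta> ^ (n + 1) \<le> \<theta> ^ n" using assms by (intro power_decreasing) auto
    then have ex: "\<exists>n. \<theta> ^ n + \<theta> ^ (n + 1) \<le> 1 / a" using n by (intro exI[of _ n]) (simp add: field_simps)
    define K where "K = (LEAST n. \<theta> ^ n + \<theta> ^ (n + 1) \<le> 1 / a)"
    have K: "\<theta> ^ K + \<theta> ^ (K + 1) \<le> 1 / a" unfolding K_def using ex by (rule LeastI_ex)
    have K0: "K \<noteq> 0"
    proof
      assume "K = 0"
      then have c1: "1 + \<theta> \<le> 1 / a" using K by simp
      have t: "\<theta> * \<theta> < \<theta> * 1" using assms by (intro mult_strict_left_mono) auto
      have e: "\<theta> ^ 1 + \<theta> ^ (1 + 1) = \<theta> + \<theta> * \<theta>" by (simp add: power2_eq_square)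
      have "\<theta> ^ 1 + \<theta> ^ (1 + 1) < 1 + \<theta>" unfolding e using t assms(2) by linarith
      then show False using nl c1 by linarith
    qed
    have "\<not> (\<theta> ^ (K - 1) + \<theta> ^ (K - 1 + 1) \<le> 1 / a)"
      unfolding K_def by (rule not_less_Least) (use K0 K_def in simp)
    then have "1 / a < \<theta> ^ (K - 1) + \<theta> ^ K" using K0 by simp
    then show False using nex K K0 by auto
  qed
  have low: "a * (\<theta> ^ 1 + \<theta> ^ (1 + 1)) \<le> 1" using low1 assms(3) by (simp add: field_simps)
  show "optimal_code a p (golomb 1)" unfolding p_def
    by (rule golomb_optimal[OF assms(1,2,3) _ low]) auto
qed

end
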